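(* Let $(X,T)$ be a minimal dendric subshift over the finite alphabet $\mathcal{A}$. Let $$H=\Big\{\sum_{a\in\mathcal{A}}\sum_{k\in K_a}\alpha(a,k)\,\chi_{T^k([a])}\ :\ K_a\subseteq\mathbb{Z}\text{ finite},\ \alpha(a,k)\in\mathbb{Z}\Big\}\subseteq C(X,\mathbb{Z}).$$ Then for every $v\in\mathcal{L}(X)$, the characteristic function $\chi_{[v]}$ belongs to $H$.
   Context: $T$ is the shift on $\mathcal{A}^{\mathbb Z}$, $(X,T)$ a subshift (closed shift-invariant subset), minimal if it has no nonempty proper closed invariant subset. $\mathcal{L}(X)$ is the set of finite factors of elements of $X$. For $w\in\mathcal{L}(X)$ let $L(w)=\{a: aw\in\mathcal{L}(X)\}$, $R(w)=\{b: wb\in\mathcal{L}(X)\}$, $E(w)=\{(a,b): awb\in\mathcal{L}(X)\}$; the extension graph of $w$ is the bipartite graph on the disjoint union of $L(w)$ and $R(w)$ with edge set $E(w)$. A minimal subshift is dendric if every extension graph (including that of the empty word) is a tree. For a word $v$, $[v]=\{x\in X: x_0\cdots x_{|v|-1}=v\}$; $\chi_A$ denotes the characteristic function of $A\subseteq X$. *)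

theory Defs
  imports "HOL-Analysis.Analysis"
begin

text \<open>Points of A^Z are functions int => 'a. shiftpow k is T^k, T the left shift.\<close>

definition shiftpow :: "int \<Rightarrow> (int \<Rightarrow> 'a) \<Rightarrow> (int \<Rightarrow> 'a)" where
  "shiftpow k x = (\<lambda>n. x (n + k))"

abbreviation shift :: "(int \<Rightarrow> 'a) \<Rightarrow> (int \<Rightarrow> 'a)" where
  "shift \<equiv> shiftpow 1"

definition subshift :: "'a set \<Rightarrow> (int \<Rightarrow> 'a) set \<Rightarrow> bool" where
  "subshift A X \<longleftrightarrow> finite A \<and>
     closedin (product_topology (\<lambda>_::int. discrete_topology A) UNIV) X \<and>
     shift ` X = X"

definition minimal_subshift :: "'a set \<Rightarrow> (int \<Rightarrow> 'a) set \<Rightarrow> bool" where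
  "minimal_subshift A X \<longleftrightarrow> subshift A X \<and> X \<noteq> {} \<and>
     (\<forall>Y. Y \<subseteq> X \<and> Y \<noteq> {} \<and> subshift A Y \<longrightarrow> Y = X)"

definition occurs_at :: "'a list \<Rightarrow> (int \<Rightarrow> 'a) \<Rightarrow> int \<Rightarrow> bool" where
  "occurs_at w x i \<longleftrightarrow> (\<forall>j<length w. x (i + int j) = w ! j)"

definition lang :: "(int \<Rightarrow> 'a) set \<Rightarrow> 'a list set" where
  "lang X = {w. \<exists>x\<in>X. \<exists>i. occurs_at w x i}"

definition Lext :: "(int \<Rightarrow> 'a) set \<Rightarrow> 'a list \<Rightarrow> 'a set" where
  "Lext X w = {a. a # w \<in> lang X}"

definition Rext :: "(int \<Rightarrow> 'a) set \<Rightarrow> 'a list \<Rightarrow> 'a set" where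
  "Rext X w = {b. w @ [b] \<in> lang X}"

definition Eext :: "(int \<Rightarrow> 'a) set \<Rightarrow> 'a list \<Rightarrow> ('a \<times> 'a) set" where
  "Eext X w = {(a, b). a # w @ [b] \<in> lang X}"

text \<open>Extension graph: vertices Inl a (a in L(w)) and Inr b (b in R(w)),
  undirected edges {Inl a, Inr b} for (a,b) in E(w).\<close>
definition ext_vertices :: "(int \<Rightarrow> 'a) set \<Rightarrow> 'a list \<Rightarrow> ('a + 'a) set" where
  "ext_vertices X w = Inl ` Lext X w \<union> Inr ` Rext X w"

definition ext_adj :: "(int \<Rightarrow> 'a) set \<Rightarrow> 'a list \<Rightarrow> ('a + 'a) \<Rightarrow> ('a + 'a) \<Rightarrow> bool" where
  "ext_adj X w u v \<longleftrightarrow>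
     (\<exists>a b. (a, b) \<in> Eext X w \<and> ((u = Inl a \<and> v = Inr b) \<or> (u = Inr b \<and> v = Inl a)))"

definition graph_connected :: "'v set \<Rightarrow> ('v \<Rightarrow> 'v \<Rightarrow> bool) \<Rightarrow> bool" where
  "graph_connected V E \<longleftrightarrow> V \<noteq> {} \<and>
     (\<forall>u\<in>V. \<forall>v\<in>V. (\<lambda>x y. x \<in> V \<and> y \<in> V \<and> E x y)\<^sup>*\<^sup>* u v)"

definition graph_acyclic :: "'v set \<Rightarrow> ('v \<Rightarrow> 'v \<Rightarrow> bool) \<Rightarrow> bool" where
  "graph_acyclic V E \<longleftrightarrow> \<not> (\<exists>cs. length cs \<ge> 3 \<and> distinct cs \<and> set cs \<subseteq> V \<and>
      (\<forall>i. Suc i < length cs \<longrightarrow> E (cs ! i) (cs ! Suc i)) \<and> E (last cs) (hd cs))"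

definition graph_tree :: "'v set \<Rightarrow> ('v \<Rightarrow> 'v \<Rightarrow> bool) \<Rightarrow> bool" where
  "graph_tree V E \<longleftrightarrow> graph_connected V E \<and> graph_acyclic V E"

definition dendric :: "'a set \<Rightarrow> (int \<Rightarrow> 'a) set \<Rightarrow> bool" where
  "dendric A X \<longleftrightarrow> minimal_subshift A X \<and>
     (\<forall>w\<in>lang X. graph_tree (ext_vertices X w) (ext_adj X w))"

definition cyl :: "(int \<Rightarrow> 'a) set \<Rightarrow> 'a list \<Rightarrow> (int \<Rightarrow> 'a) set" where
  "cyl X v = {x\<in>X. occurs_at v x 0}"

text \<open>The group H of integer combinations of chi_{T^k [a]}, as functions X -> Z
  (compared on X only).\<close>
definition Hgrp :: "'a set \<Rightarrow> (int \<Rightarrow> 'a) set \<Rightarrow> ((int \<Rightarrow> 'a) \<Rightarrow> int) set" where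
  "Hgrp A X = {f. \<exists>K \<alpha>. finite K \<and> K \<subseteq> A \<times> UNIV \<and>
      (\<forall>x\<in>X. f x = (\<Sum>(a, k)\<in>K. \<alpha> (a, k) * indicator (shiftpow k ` cyl X [a]) x))}"

end

theory Submission
  imports Defs
begin
definition G :: "(int \<Rightarrow> 'a) set \<Rightarrow> 'a \<times> int \<Rightarrow> (int \<Rightarrow> 'a) \<Rightarrow> int" where
  "G X p x = indicator (shiftpow (snd p) ` cyl X [fst p]) x"

lemma Hgrp_alt: "Hgrp A X = {f. \<exists>K \<alpha>. finite K \<and> K \<subseteq> A \<times> UNIV \<and>
      (\<forall>x\<in>X. f x = (\<Sum>p\<in>K. \<alpha> p * G X p x))}"
  unfolding Hgrp_def G_def by (simp add: split_beta)

lemma H_agree: "f \<in> Hgrp A X \<Longrightarrow> (\<forall>x\<in>X. g x = f x) \<Longrightarrow> g \<in> Hgrp A X"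
  unfolding Hgrp_alt by auto

lemma H_zero: "(\<lambda>_. 0) \<in> Hgrp A X"
  unfolding Hgrp_alt by (rule CollectI, rule exI[of _ "{}"]) auto

lemma H_neg: assumes "f \<in> Hgrp A X" shows "(\<lambda>x. - f x) \<in> Hgrp A X"
proof -
  from assms obtain K \<alpha> where K: "finite K" "K \<subseteq> A \<times> UNIV" "\<forall>x\<in>X. f x = (\<Sum>p\<in>K. \<alpha> p * G X p x)"
    unfolding Hgrp_alt by auto
  show ?thesis unfolding Hgrp_alt
    by (rule CollectI, rule exI[of _ K], rule exI[of _ "\<lambda>p. - \<alpha> p"])
       (use K in \<open>auto simp: sum_negf\<close>)
qed

lemma H_add: assumes "f \<in> Hgrp A X" "g \<in> Hgrp A X" shows "(\<lambda>x. f x + g x) \<in> Hgrp A X"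
proof -
  from assms(1) obtain K1 \<alpha>1 where K1: "finite K1" "K1 \<subseteq> A \<times> UNIV" "\<forall>x\<in>X. f x = (\<Sum>p\<in>K1. \<alpha>1 p * G X p x)"
    unfolding Hgrp_alt by auto
  from assms(2) obtain K2 \<alpha>2 where K2: "finite K2" "K2 \<subseteq> A \<times> UNIV" "\<forall>x\<in>X. g x = (\<Sum>p\<in>K2. \<alpha>2 p * G X p x)"
    unfolding Hgrp_alt by auto
  define \<beta> where "\<beta> p = (if p \<in> K1 then \<alpha>1 p else 0) + (if p \<in> K2 then \<alpha>2 p else 0)" for p
  have "(\<Sum>p\<in>K1 \<union> K2. \<beta> p * G X p x) = (\<Sum>p\<in>K1. \<alpha>1 p * G X p x) + (\<Sum>p\<in>K2. \<alpha>2 p * G X p x)" for x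
  proof -
    have "(\<Sum>p\<in>K1 \<union> K2. \<beta> p * G X p x) = (\<Sum>p\<in>K1 \<union> K2. (if p \<in> K1 then \<alpha>1 p * G X p x else 0))
       + (\<Sum>p\<in>K1 \<union> K2. (if p \<in> K2 then \<alpha>2 p * G X p x else 0))"
      unfolding \<beta>_def sum.distrib[symmetric] by (rule sum.cong) (auto simp: distrib_right)
    also have "\<dots> = (\<Sum>p\<in>K1. \<alpha>1 p * G X p x) + (\<Sum>p\<in>K2. \<alpha>2 p * G X p x)"
      using K1(1) K2(1) by (simp add: sum.If_cases Int_absorb1 Int_absorb2)
    finally show ?thesis .
  qed
  then show ?thesis unfolding Hgrp_alt
    by (intro CollectI exI[of _ "K1 \<union> K2"] exI[of _ \<beta>]) (use K1 K2 in auto)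
qed

lemma H_diff: "f \<in> Hgrp A X \<Longrightarrow> g \<in> Hgrp A X \<Longrightarrow> (\<lambda>x. f x - g x) \<in> Hgrp A X"
  using H_add[OF _ H_neg, of f A X g] by simp

lemma H_sum: "finite B \<Longrightarrow> (\<And>b. b \<in> B \<Longrightarrow> f b \<in> Hgrp A X) \<Longrightarrow> (\<lambda>x. \<Sum>b\<in>B. f b x) \<in> Hgrp A X"
proof (induction B rule: finite_induct)
  case empty then show ?case using H_zero by simp
next
  case (insert b B) then show ?case using H_add[of "f b" A X "\<lambda>x. \<Sum>b\<in>B. f b x"] by simp
qed

lemma shiftpow_add: "shiftpow a (shiftpow b x) = shiftpow (a + b) x"
  unfolding shiftpow_def by (simp add: ac_simps)

lemma shiftpow_0: "shiftpow 0 x = x"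
  unfolding shiftpow_def by simp

lemma subshift_vals: "subshift A X \<Longrightarrow> x \<in> X \<Longrightarrow> x n \<in> A"
  unfolding subshift_def using closedin_subset by (fastforce simp: topspace_product_topology)

lemma shift_nat: assumes "subshift A X" "x \<in> X" shows "shiftpow (int n) x \<in> X"
proof (induction n)
  case 0 then show ?case using assms(2) by (simp add: shiftpow_0)
next
  case (Suc n)
  have "shiftpow 1 (shiftpow (int n) x) \<in> X" using Suc assms(1) unfolding subshift_def by blast
  then show ?case by (simp add: shiftpow_add add.commute)
qed

lemma shift_neg1: assumes "subshift A X" "x \<in> X" shows "shiftpow (-1) x \<in> X"
proof -
  from assms obtain y where "y \<in> X" "x = shiftpow 1 y" unfolding subshift_def by blast
  then show ?thesis by (simp add: shiftpow_add shiftpow_0)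
qed

lemma shift_negnat: assumes "subshift A X" "x \<in> X" shows "shiftpow (- int n) x \<in> X"
proof (induction n)
  case 0 then show ?case using assms(2) by (simp add: shiftpow_0)
next
  case (Suc n)
  have "shiftpow (-1) (shiftpow (- int n) x) \<in> X" using Suc shift_neg1 assms(1) by blast
  then show ?case by (simp add: shiftpow_add)
qed

lemma shift_int: assumes "subshift A X" "x \<in> X" shows "shiftpow k x \<in> X"
proof (cases "k \<ge> 0")
  case True then show ?thesis using shift_nat[OF assms, of "nat k"] by simp
next
  case False then show ?thesis using shift_negnat[OF assms, of "nat (-k)"] by simp
qed

lemma G_eval: assumes "subshift A X" "x \<in> X"
  shows "G X (a, k) x = (if x (-k) = a then 1 else 0)"
proof -
  have "x \<in> shiftpow k ` cyl X [a] \<longleftrightarrow> x (-k) = a"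
  proof
    assume "x \<in> shiftpow k ` cyl X [a]"
    then obtain y where "y \<in> cyl X [a]" "x = shiftpow k y" by blast
    then show "x (-k) = a" by (simp add: cyl_def occurs_at_def shiftpow_def)
  next
    assume h: "x (-k) = a"
    have "shiftpow (-k) x \<in> X" using shift_int[OF assms] .
    then have "shiftpow (-k) x \<in> cyl X [a]" using h by (simp add: cyl_def occurs_at_def shiftpow_def)
    moreover have "x = shiftpow k (shiftpow (-k) x)" by (simp add: shiftpow_add shiftpow_0)
    ultimately show "x \<in> shiftpow k ` cyl X [a]" by blast
  qed
  then show ?thesis by (simp add: G_def indicator_def)
qed

lemma H_gen: assumes "subshift A X" "a \<in> A"
  shows "(\<lambda>x. if x i = a then 1 else 0) \<in> Hgrp A X"
  unfolding Hgrp_alt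
  by (intro CollectI exI[of _ "{(a, -i)}"] exI[of _ "\<lambda>_. 1"]) (use assms G_eval[OF assms(1)] in auto)

lemma occurs_Cons: "occurs_at (c # u) x i \<longleftrightarrow> x i = c \<and> occurs_at u x (i + 1)"
proof -
  have "(\<forall>j<length (c # u). x (i + int j) = (c # u) ! j) \<longleftrightarrow>
        x (i + int 0) = c \<and> (\<forall>j<length u. x (i + int (Suc j)) = u ! j)"
    by (simp add: All_less_Suc2 del: of_nat_Suc)
  also have "\<dots> \<longleftrightarrow> x i = c \<and> (\<forall>j<length u. x (i + 1 + int j) = u ! j)"
    by (simp add: ac_simps)
  finally show ?thesis unfolding occurs_at_def .
qed

lemma occurs_snoc: "occurs_at (u @ [d]) x i \<longleftrightarrow> occurs_at u x i \<and> x (i + int (length u)) = d"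
  unfolding occurs_at_def
  by (auto simp: nth_append All_less_Suc)

lemma occurs_lang: "x \<in> X \<Longrightarrow> occurs_at u x i \<Longrightarrow> u \<in> lang X"
  unfolding lang_def by blast

lemma rtranclp_path:
  assumes "R\<^sup>*\<^sup>* a b"
  shows "\<exists>xs. xs \<noteq> [] \<and> hd xs = a \<and> last xs = b \<and> distinct xs \<and>
           (\<forall>i. Suc i < length xs \<longrightarrow> R (xs ! i) (xs ! Suc i))"
  using assms
proof (induction rule: converse_rtranclp_induct)
  case base
  then show ?case by (intro exI[of _ "[b]"]) auto
next
  case (step a a')
  then obtain xs where xs: "xs \<noteq> []" "hd xs = a'" "last xs = b" "distinct xs"
    "\<forall>i. Suc i < length xs \<longrightarrow> R (xs ! i) (xs ! Suc i)" by blast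
  show ?case
  proof (cases "a \<in> set xs")
    case True
    then obtain k where k: "k < length xs" "xs ! k = a" by (meson in_set_conv_nth)
    show ?thesis
    proof (intro exI[of _ "drop k xs"] conjI allI impI)
      show "drop k xs \<noteq> []" using k by simp
      show "hd (drop k xs) = a" using k by (simp add: hd_drop_conv_nth)
      show "last (drop k xs) = b" using k xs by simp
      show "distinct (drop k xs)" using xs by simp
      fix i assume "Suc i < length (drop k xs)"
      then show "R (drop k xs ! i) (drop k xs ! Suc i)" using xs(5)[rule_format, of "k + i"] by simp
    qed
  next
    case False
    show ?thesis
    proof (intro exI[of _ "a # xs"] conjI allI impI)
      show "a # xs \<noteq> []" by simp
      show "hd (a # xs) = a" by simp
      show "last (a # xs) = b" using xs by simp
      show "distinct (a # xs)" using xs False by simp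
      fix i assume i: "Suc i < length (a # xs)"
      show "R ((a # xs) ! i) ((a # xs) ! Suc i)"
      proof (cases i)
        case 0 then show ?thesis using step(1) xs(1,2) by (simp add: hd_conv_nth)
      next
        case (Suc j) then show ?thesis using xs(5) i by simp
      qed
    qed
  qed
qed

lemma cut:
  assumes acyc: "graph_acyclic (ext_vertices X w) (ext_adj X w)"
    and e: "(c, d) \<in> Eext X w"
    and fac: "\<And>c' d'. (c', d') \<in> Eext X w \<Longrightarrow> c' \<in> Lext X w \<and> d' \<in> Rext X w"
  shows "\<exists>S. Inl c \<in> S \<and> Inr d \<notin> S \<and>
     (\<forall>c' d'. (c', d') \<in> Eext X w \<and> (c', d') \<noteq> (c, d) \<longrightarrow> (Inl c' \<in> S \<longleftrightarrow> Inr d' \<in> S))"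
proof -
  define R' where "R' u v \<longleftrightarrow> (\<exists>c' d'. (c', d') \<in> Eext X w \<and> (c', d') \<noteq> (c, d) \<and>
      ((u = Inl c' \<and> v = Inr d') \<or> (u = Inr d' \<and> v = Inl c')))" for u v
  define S where "S = {u. R'\<^sup>*\<^sup>* (Inl c) u}"
  have RV: "ext_adj X w u v \<and> u \<in> ext_vertices X w \<and> v \<in> ext_vertices X w" if "R' u v" for u v
    using that fac unfolding R'_def ext_adj_def ext_vertices_def by blast
  have clos: "Inl c' \<in> S \<longleftrightarrow> Inr d' \<in> S" if "(c', d') \<in> Eext X w" "(c', d') \<noteq> (c, d)" for c' d'
  proof -
    have "R' (Inl c') (Inr d')" "R' (Inr d') (Inl c')" using that unfolding R'_def by blast+
    then show ?thesis unfolding S_def by (auto intro: rtranclp.rtrancl_into_rtrancl)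
  qed
  have "Inr d \<notin> S"
  proof
    assume "Inr d \<in> S"
    then have "R'\<^sup>*\<^sup>* (Inl c) (Inr d)" unfolding S_def by simp
    from rtranclp_path[OF this] obtain xs where xs: "xs \<noteq> []" "hd xs = Inl c" "last xs = Inr d" "distinct xs"
      "\<forall>i. Suc i < length xs \<longrightarrow> R' (xs ! i) (xs ! Suc i)" by blast
    have l1: "length xs \<noteq> 1"
    proof
      assume "length xs = 1"
      then obtain y where "xs = [y]" by (metis One_nat_def length_0_conv length_Suc_conv)
      then show False using xs by simp
    qed
    have l2: "length xs \<noteq> 2"
    proof
      assume "length xs = 2"
      then obtain y z where yz: "xs = [y, z]" by (metis One_nat_def Suc_1 length_0_conv length_Suc_conv)
      then have "R' (Inl c) (Inr d)" using xs by auto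
      then show False unfolding R'_def by auto
    qed
    have l0: "length xs \<noteq> 0" using xs(1) by simp
    have len: "length xs \<ge> 3" using l0 l1 l2 by linarith
    have "set xs \<subseteq> ext_vertices X w"
    proof
      fix y assume "y \<in> set xs"
      then obtain k where k: "k < length xs" "xs ! k = y" by (meson in_set_conv_nth)
      show "y \<in> ext_vertices X w"
      proof (cases "Suc k < length xs")
        case True then show ?thesis using xs(5) RV k by blast
      next
        case False
        then have "Suc (k - 1) < length xs" "Suc (k - 1) = k" using k len by auto
        then show ?thesis using xs(5)[rule_format, of "k - 1"] RV k by metis
      qed
    qed
    moreover have "\<forall>i. Suc i < length xs \<longrightarrow> ext_adj X w (xs ! i) (xs ! Suc i)" using xs(5) RV by blast
    moreover have "ext_adj X w (last xs) (hd xs)" using xs(2,3) e unfolding ext_adj_def by blast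
    ultimately show False using acyc len xs(4) unfolding graph_acyclic_def by blast
  qed
  moreover have "Inl c \<in> S" unfolding S_def by simp
  ultimately show ?thesis using clos by blast
qed

lemma main:
  assumes sub: "subshift A X"
    and acyc: "\<And>w. w \<in> lang X \<Longrightarrow> graph_acyclic (ext_vertices X w) (ext_adj X w)"
  shows "(\<lambda>x. if occurs_at u x i then 1 else (0::int)) \<in> Hgrp A X"
proof (induction "length u" arbitrary: u i rule: less_induct)
  case less
  have finA: "finite A" using sub unfolding subshift_def by simp
  have vals: "\<And>x n. x \<in> X \<Longrightarrow> x n \<in> A" using subshift_vals[OF sub] by blast
  consider "u = []" | c where "u = [c]" | c w d where "u = c # w @ [d]"
  proof (cases u)
    case Nil then show ?thesis using that by blast
  next
    case (Cons c u')
    then show ?thesis using that by (cases u' rule: rev_cases) auto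
  qed
  then show ?case
  proof cases
    case 1
    have "(\<lambda>x. \<Sum>a\<in>A. if x 0 = a then 1 else (0::int)) \<in> Hgrp A X"
      by (rule H_sum[OF finA]) (rule H_gen[OF sub])
    moreover have "\<forall>x\<in>X. (if occurs_at u x i then 1 else (0::int)) = (\<Sum>a\<in>A. if x 0 = a then 1 else (0::int))"
      using 1 vals finA by (simp add: occurs_at_def sum.delta')
    ultimately show ?thesis by (rule H_agree)
  next
    case (2 c)
    have occ: "occurs_at u x i \<longleftrightarrow> x i = c" for x
      using 2 by (simp add: occurs_Cons occurs_at_def)
    show ?thesis
    proof (cases "c \<in> A")
      case True
      show ?thesis by (rule H_agree[OF H_gen[OF sub True, of i]]) (simp add: occ)
    next
      case False
      have "\<forall>x\<in>X. (if occurs_at u x i then 1 else (0::int)) = 0"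
      proof
        fix x assume "x \<in> X"
        then have "x i \<noteq> c" using False vals by metis
        then show "(if occurs_at u x i then 1 else (0::int)) = 0" using occ by simp
      qed
      then show ?thesis by (rule H_agree[OF H_zero])
    qed
  next
    case (3 c w d)
    show ?thesis
    proof (cases "u \<in> lang X")
      case False
      have "\<forall>x\<in>X. (if occurs_at u x i then 1 else (0::int)) = 0"
      proof
        fix x assume "x \<in> X"
        then have "\<not> occurs_at u x i" using False occurs_lang by metis
        then show "(if occurs_at u x i then 1 else (0::int)) = 0" by simp
      qed
      then show ?thesis by (rule H_agree[OF H_zero])
    next
      case True
      have Eext_iff: "(c', d') \<in> Eext X w \<longleftrightarrow> c' # w @ [d'] \<in> lang X" for c' d'
        unfolding Eext_def by simp
      have e: "(c, d) \<in> Eext X w" using True 3 Eext_iff by simp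
      have fac: "c' \<in> Lext X w \<and> d' \<in> Rext X w" if "(c', d') \<in> Eext X w" for c' d'
      proof -
        from that obtain x j where "x \<in> X" "occurs_at (c' # w @ [d']) x j"
          unfolding Eext_def lang_def by blast
        then have "occurs_at (c' # w) x j" "occurs_at (w @ [d']) x (j + 1)"
          using occurs_Cons[of c' "w @ [d']"] occurs_snoc[of "c' # w" d'] by auto
        then show ?thesis unfolding Lext_def Rext_def using \<open>x \<in> X\<close> occurs_lang by blast
      qed
      have wl: "w \<in> lang X"
      proof -
        have "w @ [d] \<in> lang X" using fac[OF e] unfolding Rext_def by simp
        then obtain x j where "x \<in> X" "occurs_at (w @ [d]) x j" unfolding lang_def by blast
        then have "occurs_at w x j" by (simp add: occurs_snoc)
        then show ?thesis using \<open>x \<in> X\<close> occurs_lang by metis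
      qed
      obtain S where S: "Inl c \<in> S" "Inr d \<notin> S"
        "\<And>c' d'. (c', d') \<in> Eext X w \<Longrightarrow> (c', d') \<noteq> (c, d) \<Longrightarrow> (Inl c' \<in> S \<longleftrightarrow> Inr d' \<in> S)"
        using cut[OF acyc[OF wl] e fac] by blast
      define B1 where "B1 = {c' \<in> A. Inl c' \<in> S}"
      define B2 where "B2 = {d' \<in> A. Inr d' \<in> S}"
      have fin: "finite B1" "finite B2" using finA unfolding B1_def B2_def by auto
      have h1: "(\<lambda>x. \<Sum>c'\<in>B1. if occurs_at (c' # w) x i then 1 else (0::int)) \<in> Hgrp A X"
        by (rule H_sum[OF fin(1)]) (rule less, simp add: 3)
      have h2: "(\<lambda>x. \<Sum>d'\<in>B2. if occurs_at (w @ [d']) x (i + 1) then 1 else (0::int)) \<in> Hgrp A X"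
        by (rule H_sum[OF fin(2)]) (rule less, simp add: 3)
      have "\<forall>x\<in>X. (if occurs_at u x i then 1 else (0::int)) =
         (\<Sum>c'\<in>B1. if occurs_at (c' # w) x i then 1 else (0::int)) -
         (\<Sum>d'\<in>B2. if occurs_at (w @ [d']) x (i + 1) then 1 else (0::int))"
      proof
        fix x assume x: "x \<in> X"
        show "(if occurs_at u x i then 1 else (0::int)) =
         (\<Sum>c'\<in>B1. if occurs_at (c' # w) x i then 1 else (0::int)) -
         (\<Sum>d'\<in>B2. if occurs_at (w @ [d']) x (i + 1) then 1 else (0::int))"
        proof (cases "occurs_at w x (i + 1)")
          case False
          then show ?thesis using 3 by (simp add: occurs_Cons occurs_snoc)
        next
          case P: True
          define c0 where "c0 = x i"
          define d0 where "d0 = x (i + 1 + int (length w))"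
          have "occurs_at (c0 # w @ [d0]) x i" using P unfolding c0_def d0_def
            by (simp add: occurs_Cons occurs_snoc)
          then have e0: "(c0, d0) \<in> Eext X w" using Eext_iff occurs_lang x by blast
          have s1: "(\<Sum>c'\<in>B1. if occurs_at (c' # w) x i then 1 else (0::int)) = (if Inl c0 \<in> S then 1 else 0)"
          proof -
            have "(\<Sum>c'\<in>B1. if occurs_at (c' # w) x i then 1 else (0::int)) = (\<Sum>c'\<in>B1. if c0 = c' then 1 else (0::int))"
              using P by (intro sum.cong) (auto simp: occurs_Cons c0_def)
            also have "\<dots> = (if c0 \<in> B1 then 1 else 0)"
              by (rule sum.delta'[OF fin(1)])
            also have "\<dots> = (if Inl c0 \<in> S then 1 else 0)"
              using vals[OF x] by (simp add: B1_def c0_def)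
            finally show ?thesis .
          qed
          have s2: "(\<Sum>d'\<in>B2. if occurs_at (w @ [d']) x (i + 1) then 1 else (0::int)) = (if Inr d0 \<in> S then 1 else 0)"
          proof -
            have "(\<Sum>d'\<in>B2. if occurs_at (w @ [d']) x (i + 1) then 1 else (0::int)) = (\<Sum>d'\<in>B2. if d0 = d' then 1 else (0::int))"
              using P by (intro sum.cong) (auto simp: occurs_snoc d0_def)
            also have "\<dots> = (if d0 \<in> B2 then 1 else 0)"
              by (rule sum.delta'[OF fin(2)])
            also have "\<dots> = (if Inr d0 \<in> S then 1 else 0)"
              using vals[OF x] by (simp add: B2_def d0_def)
            finally show ?thesis .
          qed
          have lhs: "occurs_at u x i \<longleftrightarrow> c0 = c \<and> d0 = d"
            using 3 P by (auto simp: occurs_Cons occurs_snoc c0_def d0_def)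
          show ?thesis
          proof (cases "(c0, d0) = (c, d)")
            case True
            then show ?thesis using S(1,2) s1 s2 lhs by simp
          next
            case False
            then show ?thesis using S(3)[OF e0 False] s1 s2 lhs by auto
          qed
        qed
      qed
      then show ?thesis by (rule H_agree[OF H_diff[OF h1 h2]])
    qed
  qed
qed

theorem lemma3p3:
  fixes A :: "'a set" and X :: "(int \<Rightarrow> 'a) set" and v :: "'a list"
  assumes "dendric A X"
    and "v \<in> lang X"
  shows "indicator (cyl X v) \<in> Hgrp A X"
proof -
  have sub: "subshift A X" using assms(1) unfolding dendric_def minimal_subshift_def by blast
  have acyc: "\<And>w. w \<in> lang X \<Longrightarrow> graph_acyclic (ext_vertices X w) (ext_adj X w)"
    using assms(1) unfolding dendric_def graph_tree_def by blast
  have "\<forall>x\<in>X. indicator (cyl X v) x = (if occurs_at v x 0 then 1 else (0::int))"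
    by (simp add: cyl_def indicator_def)
  moreover have "(\<lambda>x. if occurs_at v x 0 then 1 else (0::int)) \<in> Hgrp A X"
    using main[OF sub acyc] by blast
  ultimately show ?thesis using H_agree by blast
qed

end
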